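(* Let $E=\mathbb{R}\times\mathbb{R}$, $\mu({\rm d}(x,v))=\pi_{0}({\rm d}x)\varpi({\rm d}v)$ with $\pi_{0}$ a probability on $\mathbb{R}$ and $\varpi=\mathcal{N}(0,\sigma^{2})$, $\xi(x,v)=(x,-v)$ and $Qf=f\circ\xi$. Let $\psi:E\to E$ be a measurable bijection with $\psi^{-1}=\xi\circ\psi\circ\xi$, $\psi^{0}={\rm Id}$, $\psi^{k}=\psi\circ\psi^{k-1}$. For $k\geq1$ let $\nu_{k}=\mu+\mu^{\xi\circ\psi^{k}}$ and $r_{k}(z)=\frac{{\rm d}\mu^{\xi\circ\psi^{k}}/{\rm d}\nu_{k}(z)}{{\rm d}\mu/{\rm d}\nu_{k}(z)}$ if both derivatives are positive, $r_{k}(z)=0$ otherwise. Set $\alpha_{0}=0$, $\alpha_{k}=\max\{\alpha_{k-1},\min\{1,r_{k}\}\}$, $\beta_{k}=\alpha_{k}-\alpha_{k-1}$, and for $K\geq1$, $\rho_{K}=1-\sum_{k=1}^{K}\beta_{k}$ and \[P_{K}\big((x,v);{\rm d}(y,w)\big)=\sum_{k=1}^{K}\beta_{k}(x,v)\delta_{\psi^{k}(x,v)}({\rm d}(y,w))+\rho_{K}(x,v)\delta_{\xi(x,v)}({\rm d}(y,w)).\] Then for any $g\in L^{2}(\mu)$, the map $K\mapsto\mathcal{E}(g,P_{K}Q)$ is non-decreasing.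
   Context: $\mu^{\varphi}(A)=\mu(\varphi^{-1}(A))$. $\mathcal{E}(g,T)=\langle g,({\rm Id}-T)g\rangle_{\mu}$ with $\langle f,g\rangle_{\mu}=\int fg\,{\rm d}\mu$. *)

theory Defs
  imports "HOL-Probability.Probability"
begin

type_synonym state = "real \<times> real"

definition xi :: "state \<Rightarrow> state" where
  "xi z = (fst z, - snd z)"

definition Qop :: "(state \<Rightarrow> real) \<Rightarrow> state \<Rightarrow> real" where
  "Qop f = f \<circ> xi"

definition add_measure :: "'a measure \<Rightarrow> 'a measure \<Rightarrow> 'a measure" where
  "add_measure M N = measure_of (space M) (sets M) (\<lambda>A. emeasure M A + emeasure N A)"

definition nu_k :: "state measure \<Rightarrow> (state \<Rightarrow> state) \<Rightarrow> nat \<Rightarrow> state measure" where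
  "nu_k M psi k = add_measure M (distr M M (xi \<circ> (psi ^^ k)))"

definition r_k :: "state measure \<Rightarrow> (state \<Rightarrow> state) \<Rightarrow> nat \<Rightarrow> state \<Rightarrow> ennreal" where
  "r_k M psi k z =
     (let a = RN_deriv (nu_k M psi k) (distr M M (xi \<circ> (psi ^^ k))) z;
          b = RN_deriv (nu_k M psi k) M z
      in if a > 0 \<and> b > 0 then a / b else 0)"

fun alpha_k :: "state measure \<Rightarrow> (state \<Rightarrow> state) \<Rightarrow> nat \<Rightarrow> state \<Rightarrow> real" where
  "alpha_k M psi 0 z = 0"
| "alpha_k M psi (Suc k) z =
     max (alpha_k M psi k z) (enn2real (min 1 (r_k M psi (Suc k) z)))"

definition beta_k :: "state measure \<Rightarrow> (state \<Rightarrow> state) \<Rightarrow> nat \<Rightarrow> state \<Rightarrow> real" where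
  "beta_k M psi k z = alpha_k M psi k z - alpha_k M psi (k - 1) z"

definition rho_K :: "state measure \<Rightarrow> (state \<Rightarrow> state) \<Rightarrow> nat \<Rightarrow> state \<Rightarrow> real" where
  "rho_K M psi K z = 1 - (\<Sum>k = 1..K. beta_k M psi k z)"

text \<open>Action of the kernel P_K on a function f:
  (P_K f)(z) = sum_{k=1}^K beta_k(z) f(psi^k z) + rho_K(z) f(xi z).\<close>
definition P_K :: "state measure \<Rightarrow> (state \<Rightarrow> state) \<Rightarrow> nat \<Rightarrow> (state \<Rightarrow> real) \<Rightarrow> state \<Rightarrow> real" where
  "P_K M psi K f z =
     (\<Sum>k = 1..K. beta_k M psi k z * f ((psi ^^ k) z)) + rho_K M psi K z * f (xi z)"

definition dirichlet :: "'a measure \<Rightarrow> ('a \<Rightarrow> real) \<Rightarrow> (('a \<Rightarrow> real) \<Rightarrow> 'a \<Rightarrow> real) \<Rightarrow> real" where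
  "dirichlet M g T = (\<integral>z. g z * (g z - T g z) \<partial>M)"

end

theory Submission imports Defs begin

lemma add_measure_sets[simp]: "sets (add_measure M N) = sets M"
  unfolding add_measure_def by (simp add: sets_measure_of_conv sets.space_closed sets.sigma_sets_eq)

lemma add_measure_space[simp]: "space (add_measure M N) = space M"
  unfolding add_measure_def by (simp add: space_measure_of_conv)

lemma emeasure_add_measure:
  assumes "sets N = sets M" "A \<in> sets M"
  shows "emeasure (add_measure M N) A = emeasure M A + emeasure N A"
  unfolding add_measure_def
proof (rule emeasure_measure_of_sigma)
  show "sigma_algebra (space M) (sets M)" by (rule sets.sigma_algebra_axioms)
  show "positive (sets M) (\<lambda>A. emeasure M A + emeasure N A)"
    by (simp add: positive_def)
  show "countably_additive (sets M) (\<lambda>A. emeasure M A + emeasure N A)"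
    unfolding countably_additive_def
  proof (intro allI impI)
    fix F :: "nat \<Rightarrow> _" assume F: "range F \<subseteq> sets M" "disjoint_family F"
    have F': "range F \<subseteq> sets N" using F assms(1) by simp
    show "(\<Sum>i. emeasure M (F i) + emeasure N (F i)) = emeasure M (\<Union> (range F)) + emeasure N (\<Union> (range F))"
      using suminf_emeasure[OF F] suminf_emeasure[OF F' F(2)]
      by (simp add: suminf_add[symmetric])
  qed
qed (use assms in auto)

definition Tm :: "(state \<Rightarrow> state) \<Rightarrow> nat \<Rightarrow> state \<Rightarrow> state" where
  "Tm psi j = xi \<circ> (psi ^^ j)"

fun lam :: "state measure \<Rightarrow> (state \<Rightarrow> state) \<Rightarrow> nat \<Rightarrow> state measure" where
  "lam M psi 0 = M"
| "lam M psi (Suc j) = add_measure (lam M psi j) (distr M M (Tm psi (Suc j)))"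

lemma xi_xi[simp]: "xi (xi z) = z"
  by (simp add: xi_def)

lemma xi_meas[measurable]: "xi \<in> borel_measurable borel"
  unfolding xi_def[abs_def] by (intro borel_measurable_continuous_onI continuous_intros)

locale mysetup = prob_space M for M :: "state measure" +
  fixes psi :: "state \<Rightarrow> state"
  assumes sets_M: "sets M = sets borel"
    and xi_inv: "distr M M xi = M"
    and psi_meas: "psi \<in> borel_measurable borel"
    and psi_xi: "\<And>z. psi (xi (psi z)) = xi z"
begin

abbreviation "T \<equiv> Tm psi"
abbreviation "mu j \<equiv> distr M M (T j)"

lemma space_M[simp]: "space M = UNIV"
  using sets_eq_imp_space_eq[OF sets_M] by simp

lemma meas_M_iff: "measurable M M = measurable borel borel"
  by (rule measurable_cong_sets) (simp_all add: sets_M)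

lemma borel_M_iff: "borel_measurable M = borel_measurable borel"
  by (rule measurable_cong_sets) (simp_all add: sets_M)

lemma psi_pow_meas: "psi ^^ j \<in> measurable borel borel"
proof (induction j)
  case (Suc j)
  show ?case using measurable_comp[OF Suc.IH psi_meas] by (simp add: comp_def)
qed simp

lemma T_meas_borel: "T j \<in> measurable borel borel"
  unfolding Tm_def using psi_pow_meas[of j] by (auto intro: measurable_comp)

lemma T_meas[measurable]: "T j \<in> measurable M M"
  using T_meas_borel meas_M_iff by simp

lemma xi_meas_M[measurable]: "xi \<in> measurable M M"
  using xi_meas meas_M_iff by simp

lemma psi_pow_xi: "(psi ^^ j) (xi ((psi ^^ j) z)) = xi z"
proof (induction j arbitrary: z)
  case (Suc j)
  have "(psi ^^ Suc j) (xi ((psi ^^ Suc j) z)) = psi ((psi ^^ j) (xi ((psi ^^ j) (psi z))))"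
    by (simp add: funpow_swap1)
  also have "\<dots> = xi z" using Suc psi_xi by simp
  finally show ?case .
qed simp

lemma TT[simp]: "T k (T k z) = z"
  unfolding Tm_def using psi_pow_xi by simp

lemma Tcomp: "j \<le> k \<Longrightarrow> T k (T j (xi z)) = T (k - j) z"
proof -
  assume "j \<le> k"
  then have "psi ^^ k = psi ^^ (k - j) \<circ> psi ^^ j" by (simp add: funpow_add[symmetric])
  then show ?thesis unfolding Tm_def using psi_pow_xi by simp
qed

lemma T0: "T 0 = xi"
  by (simp add: Tm_def)

lemma mu0: "mu 0 = M"
  using xi_inv by (simp add: T0)

lemma sets_mu[simp]: "sets (mu j) = sets M" by simp

lemma distr_mu: "j \<le> k \<Longrightarrow> distr (mu j) M (T k) = mu (k - j)"
proof -
  assume jk: "j \<le> k"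
  have "distr (mu j) M (T k) = distr M M (T k \<circ> T j)"
    by (simp add: distr_distr)
  also have "\<dots> = distr (distr M M xi) M (T k \<circ> T j)"
    using xi_inv by simp
  also have "\<dots> = distr M M (T k \<circ> T j \<circ> xi)"
    by (simp add: distr_distr)
  also have "\<dots> = mu (k - j)"
    by (rule distr_cong) (simp_all add: Tcomp[OF jk])
  finally show ?thesis .
qed

lemma sets_lam[simp]: "sets (lam M psi j) = sets M"
  by (induction j) simp_all

lemma emeasure_lam: "A \<in> sets M \<Longrightarrow> emeasure (lam M psi j) A = (\<Sum>i\<le>j. emeasure (mu i) A)"
proof (induction j)
  case 0 then show ?case using mu0 by simp
next
  case (Suc j)
  then show ?case by (simp add: emeasure_add_measure)
qed

lemma space_lam[simp]: "space (lam M psi j) = UNIV"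
  using sets_eq_imp_space_eq[OF sets_lam[of j]] by simp

lemma UNIV_sets[simp]: "UNIV \<in> sets M"
  using sets.top[of M] by simp

lemma emeasure_mu_space: "emeasure (mu i) UNIV = 1"
  using emeasure_space_1 T_meas[of i] by (subst emeasure_distr) auto

lemma finite_lam: "finite_measure (lam M psi k)"
  by (rule finite_measureI) (simp add: emeasure_lam[OF UNIV_sets] emeasure_mu_space)

lemma ac_lam: "i \<le> k \<Longrightarrow> absolutely_continuous (lam M psi k) (mu i)"
  unfolding absolutely_continuous_def
proof
  fix A assume i: "i \<le> k" and A: "A \<in> null_sets (lam M psi k)"
  then have As: "A \<in> sets M" by (simp add: null_sets_def)
  have "emeasure (lam M psi k) A = 0" using A by (simp add: null_setsD1)
  then have "(\<Sum>j\<le>k. emeasure (mu j) A) = 0" using emeasure_lam[OF As, of k] by simp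
  then have "emeasure (mu i) A = 0" using i by simp
  then show "A \<in> null_sets (mu i)" using As by (simp add: null_sets_def)
qed

lemma lam_inv: "distr (lam M psi k) (lam M psi k) (T k) = lam M psi k"
proof (rule measure_eqI)
  fix A assume "A \<in> sets (distr (lam M psi k) (lam M psi k) (T k))"
  then have A: "A \<in> sets M" by simp
  have Tm: "T k \<in> measurable (lam M psi k) (lam M psi k)"
    using T_meas[of k] by (simp add: measurable_def)
  have "emeasure (distr (lam M psi k) (lam M psi k) (T k)) A = emeasure (lam M psi k) (T k -` A)"
    using A Tm by (simp add: emeasure_distr)
  also have "\<dots> = (\<Sum>i\<le>k. emeasure (mu i) (T k -` A))"
    using A T_meas[of k] by (intro emeasure_lam) (auto simp: measurable_def)
  also have "\<dots> = (\<Sum>i\<le>k. emeasure (distr (mu i) M (T k)) A)"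
    using A by (simp add: emeasure_distr)
  also have "\<dots> = (\<Sum>i\<le>k. emeasure (mu (k - i)) A)"
    by (intro sum.cong refl) (simp add: distr_mu)
  also have "\<dots> = (\<Sum>i\<le>k. emeasure (mu i) A)"
    using sum.atLeastAtMost_rev[of "\<lambda>i. emeasure (mu i) A" 0 k] by (simp add: atLeast0AtMost)
  also have "\<dots> = emeasure (lam M psi k) A" using emeasure_lam[OF A] by simp
  finally show "emeasure (distr (lam M psi k) (lam M psi k) (T k)) A = emeasure (lam M psi k) A" .
qed simp

end

lemma density_comp_involution:
  assumes T: "T \<in> measurable L L" and inv: "distr L L T = L"
    and TT: "\<And>z. z \<in> space L \<Longrightarrow> T (T z) = z"
    and f: "f \<in> borel_measurable L"
  shows "density L (\<lambda>z. f (T z)) = distr (density L f) L T"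
proof (rule measure_eqI)
  fix A assume "A \<in> sets (density L (\<lambda>z. f (T z)))"
  then have A: "A \<in> sets L" by simp
  have "emeasure (density L (\<lambda>z. f (T z))) A = (\<integral>\<^sup>+ z. f (T z) * indicator A z \<partial>L)"
    using A T f by (simp add: emeasure_density)
  also have "\<dots> = (\<integral>\<^sup>+ z. f (T z) * indicator A (T (T z)) \<partial>L)"
    by (intro nn_integral_cong) (simp add: TT)
  also have "\<dots> = (\<integral>\<^sup>+ w. f w * indicator A (T w) \<partial>distr L L T)"
    using A T f by (subst nn_integral_distr) auto
  also have "\<dots> = (\<integral>\<^sup>+ w. f w * indicator (T -` A \<inter> space L) w \<partial>L)"
    unfolding inv by (intro nn_integral_cong) (auto simp: indicator_def)
  also have "\<dots> = emeasure (distr (density L f) L T) A"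
    using A T f by (simp add: emeasure_distr emeasure_density measurable_sets)
  finally show "emeasure (density L (\<lambda>z. f (T z))) A = emeasure (distr (density L f) L T) A" .
qed simp

lemma r_point:
  fixes x y :: real
  assumes x: "x > 0" and y: "y \<ge> 0"
  shows "enn2real (min 1 (let a = ennreal y / (ennreal x + ennreal y); b = ennreal x / (ennreal x + ennreal y)
            in if a > 0 \<and> b > 0 then a / b else 0)) = min 1 (y / x)"
proof -
  have s: "ennreal x + ennreal y = ennreal (x + y)" using x y by (simp del: ennreal_plus add: ennreal_plus[symmetric])
  have a: "ennreal y / (ennreal x + ennreal y) = ennreal (y / (x + y))"
    unfolding s by (rule divide_ennreal) (use x y in auto)
  have b: "ennreal x / (ennreal x + ennreal y) = ennreal (x / (x + y))"
    unfolding s by (rule divide_ennreal) (use x y in auto)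
  have bpos: "x / (x + y) > 0" using x y by simp
  show ?thesis
  proof (cases "y = 0")
    case True then show ?thesis using x unfolding a b Let_def by simp
  next
    case False
    then have ypos: "y / (x + y) > 0" using x y by simp
    have "ennreal (y / (x + y)) / ennreal (x / (x + y)) = ennreal ((y / (x + y)) / (x / (x + y)))"
      using ypos bpos by (intro divide_ennreal) auto
    also have "(y / (x + y)) / (x / (x + y)) = y / x" using x y by simp
    finally have q: "ennreal (y / (x + y)) / ennreal (x / (x + y)) = ennreal (y / x)" .
    have m: "min 1 (ennreal (y / x)) = ennreal (min 1 (y / x))"
    proof (cases "y / x \<le> 1")
      case True then show ?thesis
        by (metis ennreal_1 ennreal_leI min.absorb2 min_absorb2)
    next
      case False then show ?thesis
        by (metis ennreal_1 ennreal_leI linorder_le_cases min.absorb1 min_def)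
    qed
    have c: "ennreal (y / (x + y)) > 0 \<and> ennreal (x / (x + y)) > 0" using ypos bpos by simp
    have "enn2real (ennreal (min 1 (y / x))) = min 1 (y / x)" using x y by simp
    then show ?thesis unfolding a b Let_def using c by (simp only: if_True q m simp_thms)
  qed
qed

lemma beta_point:
  fixes c m :: real and F :: "nat \<Rightarrow> real" and I :: "nat set"
  assumes I: "finite I" and m: "0 \<le> m" "m \<le> c" and F: "\<forall>i\<in>I. 0 \<le> F i"
  shows "max (Max (insert 0 ((\<lambda>i. min c (F i)) ` I))) m - Max (insert 0 ((\<lambda>i. min c (F i)) ` I))
         = max 0 (m - Max (insert 0 (F ` I)))"
proof (cases "\<exists>i\<in>I. m \<le> F i")
  case True
  then obtain i where i: "i \<in> I" "m \<le> F i" by blast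
  have "m \<le> min c (F i)" using i m by simp
  also have "\<dots> \<le> Max (insert 0 ((\<lambda>i. min c (F i)) ` I))" using I i by (intro Max_ge) auto
  finally have A: "m \<le> Max (insert 0 ((\<lambda>i. min c (F i)) ` I))" .
  have "m \<le> F i" by fact
  also have "\<dots> \<le> Max (insert 0 (F ` I))" using I i by (intro Max_ge) auto
  finally have B: "m \<le> Max (insert 0 (F ` I))" .
  show ?thesis using A B by simp
next
  case False
  then have "(\<lambda>i. min c (F i)) ` I = F ` I" using m by (intro image_cong refl) auto
  then show ?thesis by simp
qed

lemma Max_ins0: "finite (S::real set) \<Longrightarrow> Max (insert 0 (insert v S)) = max v (Max (insert 0 S))"
  by (simp add: insert_commute[of 0 v])

lemma alpha_point:
  fixes x :: real and F :: "nat \<Rightarrow> real"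
  assumes x: "x > 0" and q: "\<forall>j\<in>{1..k}. enn2real (min 1 (r_k M psi j z)) = min 1 (F j / x)"
    and F: "\<forall>j\<in>{1..k}. 0 \<le> F j"
  shows "j \<le> k \<Longrightarrow> alpha_k M psi j z * x = Max (insert 0 ((\<lambda>i. min x (F i)) ` {1..j}))"
proof (induction j)
  case 0 then show ?case by simp
next
  case (Suc j)
  then have IH: "alpha_k M psi j z * x = Max (insert 0 ((\<lambda>i. min x (F i)) ` {1..j}))" by simp
  have qj: "enn2real (min 1 (r_k M psi (Suc j) z)) = min 1 (F (Suc j) / x)"
    using q Suc.prems by simp
  have "alpha_k M psi (Suc j) z * x = max (alpha_k M psi j z * x) (min 1 (F (Suc j) / x) * x)"
  proof -
    have "alpha_k M psi (Suc j) z = max (alpha_k M psi j z) (min 1 (F (Suc j) / x))"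
      using qj by simp
    moreover have "\<And>a b. max a b * x = max (a * x) (b * x)"
      using x by (auto simp: max_def)
    ultimately show ?thesis by simp
  qed
  also have "min 1 (F (Suc j) / x) * x = min x (F (Suc j))"
    using x by (auto simp: min_def field_simps)
  finally have e1: "alpha_k M psi (Suc j) z * x = max (alpha_k M psi j z * x) (min x (F (Suc j)))" .
  have "{1..Suc j} = insert (Suc j) {1..j}" by auto
  then have e2: "Max (insert 0 ((\<lambda>i. min x (F i)) ` {1..Suc j})) =
      max (min x (F (Suc j))) (Max (insert 0 ((\<lambda>i. min x (F i)) ` {1..j})))"
    by (simp only: image_insert Max_ins0 finite_imageI finite_atLeastAtMost)
  show ?case unfolding e1 e2 IH by (rule max.commute)
qed

lemma AE_inv:
  assumes T: "T \<in> measurable L L" and inv: "distr L L T = L" and P: "AE x in L. P x"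
  shows "AE x in L. P (T x)"
proof -
  from P obtain N where N: "{x \<in> space L. \<not> P x} \<subseteq> N" "emeasure L N = 0" "N \<in> sets L"
    by (rule AE_E)
  have "emeasure L (T -` N \<inter> space L) = emeasure (distr L L T) N"
    using T N by (simp add: emeasure_distr)
  also have "\<dots> = 0" using inv N by simp
  finally show ?thesis
    using N T by (intro AE_I[of _ _ "T -` N \<inter> space L"]) (auto simp: measurable_def)
qed

lemma nu_sets[simp]: "sets (nu_k M psi j) = sets M"
  by (simp add: nu_k_def)

context mysetup begin

lemma Tm_fold: "xi \<circ> psi ^^ j = T j" by (simp add: Tm_def)

lemma RN_nu_meas[measurable]:
  "RN_deriv (nu_k M psi j) M \<in> borel_measurable M"
  "RN_deriv (nu_k M psi j) (mu j) \<in> borel_measurable M"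
  using borel_measurable_RN_deriv[of "nu_k M psi j"]
  by (simp_all add: measurable_cong_sets[OF nu_sets refl])

lemma r_meas[measurable]: "r_k M psi j \<in> borel_measurable M"
  unfolding r_k_def[abs_def] Let_def Tm_fold by measurable

lemma alpha_meas[measurable]: "alpha_k M psi j \<in> borel_measurable M"
proof (induction j)
  case 0 then show ?case by (simp add: alpha_k.simps(1)[abs_def])
next
  case (Suc j)
  have e: "alpha_k M psi (Suc j) = (\<lambda>z. max (alpha_k M psi j z) (enn2real (min 1 (r_k M psi (Suc j) z))))"
    by (simp add: fun_eq_iff)
  show ?case unfolding e using Suc by measurable
qed

lemma beta_meas[measurable]: "beta_k M psi j \<in> borel_measurable M"
  unfolding beta_k_def[abs_def] by measurable

lemma alpha_bounds: "0 \<le> alpha_k M psi j z \<and> alpha_k M psi j z \<le> 1"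
proof (induction j)
  case (Suc j)
  have "enn2real (min 1 (r_k M psi (Suc j) z)) \<le> 1"
    by (metis enn2real_1 enn2real_mono ennreal_1 min.cobounded1 ennreal_one_less_top)
  then show ?case using Suc by (simp add: max_def)
qed simp

lemma beta_bounds: "1 \<le> j \<Longrightarrow> 0 \<le> beta_k M psi j z \<and> beta_k M psi j z \<le> 1"
proof -
  assume "1 \<le> j"
  then obtain i where j: "j = Suc i" by (cases j) auto
  show ?thesis using alpha_bounds[of i z] alpha_bounds[of j z]
    by (simp add: beta_k_def j max_def)
qed

end

locale fixk = mysetup + fixes k :: nat assumes k1: "1 \<le> k"
begin

abbreviation "L \<equiv> lam M psi k"
abbreviation "fd i \<equiv> RN_deriv L (mu i)"
abbreviation "F i z \<equiv> enn2real (fd i z)"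

interpretation L: finite_measure L by (rule finite_lam)

lemma meas_L_iff: "measurable L L = measurable M M"
  by (rule measurable_cong_sets) simp_all

lemma borel_L_iff: "borel_measurable L = borel_measurable M"
  by (rule measurable_cong_sets) simp_all

lemma T_meas_L[measurable]: "T j \<in> measurable L L"
  using T_meas meas_L_iff by simp

lemma fd_meas[measurable]: "fd i \<in> borel_measurable M"
  using borel_measurable_RN_deriv[of L "mu i"] unfolding borel_L_iff .

lemma dens: "i \<le> k \<Longrightarrow> density L (fd i) = mu i"
  by (rule L.density_RN_deriv[OF ac_lam]) simp_all

lemma dens0: "density L (fd 0) = M"
  using dens[of 0] mu0 by simp

lemma fin: "i \<le> k \<Longrightarrow> AE z in L. fd i z \<noteq> \<infinity>"
proof -
  assume i: "i \<le> k"
  have "finite_measure (mu i)" by (rule finite_measureI) (simp add: emeasure_mu_space)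
  then have "sigma_finite_measure (mu i)" by (rule finite_measure.sigma_finite_measure)
  then show ?thesis by (rule L.RN_deriv_finite[OF _ ac_lam[OF i]]) simp
qed

lemma fd_sym: "i \<le> k \<Longrightarrow> AE z in L. fd i (T k z) = fd (k - i) z"
proof -
  assume i: "i \<le> k"
  have "density L (\<lambda>z. fd i (T k z)) = distr (density L (fd i)) L (T k)"
    by (rule density_comp_involution) (auto simp: lam_inv)
  also have "\<dots> = distr (mu i) M (T k)"
    using dens[OF i] by (intro distr_cong) simp_all
  also have "\<dots> = mu (k - i)" by (rule distr_mu[OF i])
  finally show ?thesis
    by (intro L.RN_deriv_unique) simp
qed

lemma nu_eq: "1 \<le> j \<Longrightarrow> j \<le> k \<Longrightarrow> nu_k M psi j = density L (\<lambda>z. fd 0 z + fd j z)"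
proof (rule measure_eqI)
  assume j: "1 \<le> j" "j \<le> k"
  fix A assume "A \<in> sets (nu_k M psi j)"
  then have A: "A \<in> sets M" by simp
  have "emeasure (density L (\<lambda>z. fd 0 z + fd j z)) A = (\<integral>\<^sup>+ z. (fd 0 z + fd j z) * indicator A z \<partial>L)"
    using A by (simp add: emeasure_density)
  also have "\<dots> = (\<integral>\<^sup>+ z. fd 0 z * indicator A z \<partial>L) + (\<integral>\<^sup>+ z. fd j z * indicator A z \<partial>L)"
  proof -
    have AL[measurable]: "A \<in> sets L" using A by simp
    show ?thesis unfolding distrib_right by (rule nn_integral_add) measurable
  qed
  also have "\<dots> = emeasure (density L (fd 0)) A + emeasure (density L (fd j)) A"
    using A by (simp add: emeasure_density)
  also have "\<dots> = emeasure M A + emeasure (mu j) A"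
    using dens0 dens[OF j(2)] by simp
  also have "\<dots> = emeasure (nu_k M psi j) A"
    using A by (simp add: nu_k_def Tm_fold emeasure_add_measure)
  finally show "emeasure (nu_k M psi j) A = emeasure (density L (\<lambda>z. fd 0 z + fd j z)) A" by simp
qed simp

lemma fd_meas_L[measurable]: "fd i \<in> borel_measurable L" by simp

lemma nu_fin: "finite_measure (nu_k M psi j)"
proof (rule finite_measureI)
  have "space (nu_k M psi j) = UNIV"
    using sets_eq_imp_space_eq[OF nu_sets[of M psi j]] by simp
  then show "emeasure (nu_k M psi j) (space (nu_k M psi j)) \<noteq> \<infinity>"
    by (simp add: nu_k_def Tm_fold emeasure_add_measure emeasure_mu_space)
qed

lemma RN_nu_gen:
  assumes j: "1 \<le> j" "j \<le> k" and g[measurable]: "g \<in> borel_measurable L" and gX: "density L g = X"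
    and wfin: "AE z in L. fd 0 z + fd j z \<noteq> \<infinity>" and gle: "\<And>z. g z \<le> fd 0 z + fd j z"
  shows "AE z in L. 0 < fd 0 z + fd j z \<longrightarrow> RN_deriv (nu_k M psi j) X z = g z / (fd 0 z + fd j z)"
proof -
  let ?w = "\<lambda>z. fd 0 z + fd j z"
  have "density (nu_k M psi j) (\<lambda>z. g z / ?w z) = density L (\<lambda>z. ?w z * (g z / ?w z))"
    unfolding nu_eq[OF j] by (rule density_density_eq) measurable
  also have "\<dots> = density L g"
  proof (rule density_cong)
    show "AE z in L. ?w z * (g z / ?w z) = g z"
      using wfin
    proof eventually_elim
      case (elim z)
      show ?case
      proof (cases "?w z = 0")
        case True then have "g z = 0" using gle[of z] by simp
        then show ?thesis by simp
      next
        case False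
        have "?w z * (g z / ?w z) = g z * ?w z / ?w z"
          by (simp add: ennreal_times_divide mult.commute)
        also have "\<dots> = g z" using False elim by (intro ennreal_mult_divide_eq) auto
        finally show ?thesis .
      qed
    qed
  qed measurable
  finally have D: "density (nu_k M psi j) (\<lambda>z. g z / ?w z) = X" using gX by simp
  have gm: "(\<lambda>z. g z / ?w z) \<in> borel_measurable (nu_k M psi j)"
  proof -
    have "(\<lambda>z. g z / ?w z) \<in> borel_measurable L" by measurable
    then show ?thesis using measurable_cong_sets[OF nu_sets[of M psi j] refl, of borel] borel_L_iff by metis
  qed
  have "AE z in nu_k M psi j. g z / ?w z = RN_deriv (nu_k M psi j) X z"
    by (rule sigma_finite_measure.RN_deriv_unique[OF finite_measure.sigma_finite_measure[OF nu_fin] gm D])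
  then have "AE z in density L ?w. g z / ?w z = RN_deriv (nu_k M psi j) X z"
    unfolding nu_eq[OF j] .
  then have "AE z in L. 0 < ?w z \<longrightarrow> g z / ?w z = RN_deriv (nu_k M psi j) X z"
    by (subst (asm) AE_density) measurable
  then show ?thesis by eventually_elim (simp only: eq_commute)
qed

definition "Sf z = max 0 (min (F 0 z) (F k z) - Max (insert 0 ((\<lambda>i. F i z) ` {1..<k})))"

definition "good z \<longleftrightarrow> (\<forall>i\<le>k. fd i z \<noteq> \<infinity>) \<and>
  (\<forall>j\<in>{1..k}. 0 < fd 0 z + fd j z \<longrightarrow>
     RN_deriv (nu_k M psi j) M z = fd 0 z / (fd 0 z + fd j z) \<and>
     RN_deriv (nu_k M psi j) (mu j) z = fd j z / (fd 0 z + fd j z))"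

lemma good_AE: "AE z in L. good z"
proof -
  have F: "AE z in L. \<forall>i\<in>{..k}. fd i z \<noteq> \<infinity>"
  proof (rule AE_finite_allI)
    fix i assume "i \<in> {..k}"
    then show "AE z in L. fd i z \<noteq> \<infinity>" using fin[of i] by simp
  qed simp
  have R: "AE z in L. \<forall>j\<in>{1..k}. 0 < fd 0 z + fd j z \<longrightarrow>
     RN_deriv (nu_k M psi j) M z = fd 0 z / (fd 0 z + fd j z) \<and>
     RN_deriv (nu_k M psi j) (mu j) z = fd j z / (fd 0 z + fd j z)"
  proof (rule AE_finite_allI)
    fix j assume j: "j \<in> {1..k}"
    have wfin: "AE z in L. fd 0 z + fd j z \<noteq> \<infinity>"
    proof -
      have "AE z in L. fd 0 z \<noteq> \<infinity>" using fin[of 0] by simp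
      moreover have "AE z in L. fd j z \<noteq> \<infinity>" using fin[of j] j by simp
      ultimately show ?thesis by eventually_elim auto
    qed
    have a: "AE z in L. 0 < fd 0 z + fd j z \<longrightarrow> RN_deriv (nu_k M psi j) M z = fd 0 z / (fd 0 z + fd j z)"
      using j by (intro RN_nu_gen dens0 wfin) auto
    have b: "AE z in L. 0 < fd 0 z + fd j z \<longrightarrow> RN_deriv (nu_k M psi j) (mu j) z = fd j z / (fd 0 z + fd j z)"
      using j by (intro RN_nu_gen dens wfin) auto
    show "AE z in L. 0 < fd 0 z + fd j z \<longrightarrow>
     RN_deriv (nu_k M psi j) M z = fd 0 z / (fd 0 z + fd j z) \<and>
     RN_deriv (nu_k M psi j) (mu j) z = fd j z / (fd 0 z + fd j z)"
      using a b by eventually_elim auto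
  qed simp
  show ?thesis using F R unfolding good_def by eventually_elim auto
qed

lemma fd_eq: "good z \<Longrightarrow> i \<le> k \<Longrightarrow> fd i z = ennreal (F i z)"
  unfolding good_def by (simp add: less_top)

lemma r_good:
  assumes g: "good z" and x: "F 0 z > 0" and j: "j \<in> {1..k}"
  shows "enn2real (min 1 (r_k M psi j z)) = min 1 (F j z / F 0 z)"
proof -
  define x0 where "x0 = F 0 z"
  define y0 where "y0 = F j z"
  have e0: "fd 0 z = ennreal x0" unfolding x0_def by (rule fd_eq[OF g]) simp
  have ej: "fd j z = ennreal y0" unfolding y0_def by (rule fd_eq[OF g]) (use j in simp)
  have x0: "x0 > 0" using x unfolding x0_def .
  have y0: "y0 \<ge> 0" unfolding y0_def by (rule enn2real_nonneg)
  have "0 < fd 0 z" using x0 unfolding e0 by simp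
  then have pos: "0 < fd 0 z + fd j z" by (simp add: add_pos_nonneg)
  have R: "RN_deriv (nu_k M psi j) M z = fd 0 z / (fd 0 z + fd j z)"
          "RN_deriv (nu_k M psi j) (mu j) z = fd j z / (fd 0 z + fd j z)"
    using g j pos unfolding good_def by auto
  have "r_k M psi j z = (let a = ennreal y0 / (ennreal x0 + ennreal y0);
      b = ennreal x0 / (ennreal x0 + ennreal y0) in if a > 0 \<and> b > 0 then a / b else 0)"
    unfolding r_k_def Tm_fold R by (simp only: e0 ej)
  then have "enn2real (min 1 (r_k M psi j z)) = min 1 (y0 / x0)"
    using r_point[OF x0 y0] by (simp only:)
  then show ?thesis unfolding x0_def y0_def .
qed

lemma Max0_nonneg: "finite I \<Longrightarrow> (0::real) \<le> Max (insert 0 (G ` I))"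
  by (rule Max_ge) auto

lemma beta_good:
  assumes g: "good z"
  shows "ennreal (beta_k M psi k z) * fd 0 z = ennreal (Sf z)"
proof -
  define x where "x = F 0 z"
  have e0: "fd 0 z = ennreal x" unfolding x_def by (rule fd_eq[OF g]) simp
  have xnn: "x \<ge> 0" unfolding x_def by (rule enn2real_nonneg)
  have Fnn: "\<And>i. 0 \<le> F i z" by (rule enn2real_nonneg)
  have bnn: "0 \<le> beta_k M psi k z" using beta_bounds[OF k1] by simp
  obtain k' where kk: "k = Suc k'" using k1 by (cases k) auto
  have Mx: "0 \<le> Max (insert 0 ((\<lambda>i. F i z) ` {1..<k}))" by (rule Max0_nonneg) simp
  show ?thesis
  proof (cases "x = 0")
    case True
    have "min (F 0 z) (F k z) \<le> 0" using True unfolding x_def by simp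
    then have "min (F 0 z) (F k z) - Max (insert 0 ((\<lambda>i. F i z) ` {1..<k})) \<le> 0" using Mx by linarith
    then have "Sf z = 0" unfolding Sf_def by (rule max_absorb1)
    then show ?thesis using True e0 by simp
  next
    case False
    then have x: "x > 0" using xnn by simp
    have q: "\<forall>j\<in>{1..k}. enn2real (min 1 (r_k M psi j z)) = min 1 (F j z / x)"
      using r_good[OF g] x unfolding x_def by auto
    note AP = alpha_point[OF x q]
    have A1: "alpha_k M psi k z * x = Max (insert 0 ((\<lambda>i. min x (F i z)) ` {1..k}))"
      using AP Fnn by simp
    have A0: "alpha_k M psi k' z * x = Max (insert 0 ((\<lambda>i. min x (F i z)) ` {1..k'}))"
      using AP Fnn kk by simp
    have "{1..k} = insert k {1..k'}" using kk by auto
    then have A2: "Max (insert 0 ((\<lambda>i. min x (F i z)) ` {1..k})) =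
        max (min x (F k z)) (Max (insert 0 ((\<lambda>i. min x (F i z)) ` {1..k'})))"
      by (simp only: image_insert Max_ins0 finite_imageI finite_atLeastAtMost)
    have "beta_k M psi k z * x = alpha_k M psi k z * x - alpha_k M psi k' z * x"
      unfolding beta_k_def kk by (simp add: left_diff_distrib)
    also have "\<dots> = max (Max (insert 0 ((\<lambda>i. min x (F i z)) ` {1..k'}))) (min x (F k z))
        - Max (insert 0 ((\<lambda>i. min x (F i z)) ` {1..k'}))"
      unfolding A1 A2 A0 by (simp only: max.commute)
    also have "\<dots> = max 0 (min x (F k z) - Max (insert 0 ((\<lambda>i. F i z) ` {1..k'})))"
      by (rule beta_point) (use x Fnn in auto)
    also have "{1..k'} = {1..<k}" using kk by auto
    finally have "beta_k M psi k z * x = Sf z" unfolding Sf_def x_def .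
    then show ?thesis using e0 bnn xnn by (simp add: ennreal_mult[symmetric])
  qed
qed

lemma Sf_sym:
  assumes S: "\<forall>i\<in>{..k}. fd i (T k z) = fd (k - i) z"
  shows "Sf (T k z) = Sf z"
proof -
  have F: "\<And>i. i \<le> k \<Longrightarrow> F i (T k z) = F (k - i) z" using S by simp
  have im: "(\<lambda>i. k - i) ` {1..<k} = {1..<k}"
  proof
    show "(\<lambda>i. k - i) ` {1..<k} \<subseteq> {1..<k}" by auto
    show "{1..<k} \<subseteq> (\<lambda>i. k - i) ` {1..<k}"
    proof
      fix i assume i: "i \<in> {1..<k}"
      then have "i = k - (k - i)" "k - i \<in> {1..<k}" by auto
      then show "i \<in> (\<lambda>i. k - i) ` {1..<k}" by blast
    qed
  qed
  have "(\<lambda>i. F i (T k z)) ` {1..<k} = (\<lambda>i. F (k - i) z) ` {1..<k}"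
    using F by (intro image_cong refl) auto
  also have "\<dots> = (\<lambda>i. F i z) ` ((\<lambda>i. k - i) ` {1..<k})" by (simp add: image_image)
  also have "\<dots> = (\<lambda>i. F i z) ` {1..<k}" using im by simp
  finally have I: "(\<lambda>i. F i (T k z)) ` {1..<k} = (\<lambda>i. F i z) ` {1..<k}" .
  have "F 0 (T k z) = F k z" "F k (T k z) = F 0 z" using F[of 0] F[of k] by simp_all
  then show ?thesis unfolding Sf_def I by (simp add: min.commute)
qed

lemma beta_meas_L[measurable]: "beta_k M psi j \<in> borel_measurable L"
  unfolding borel_L_iff by (rule beta_meas)

lemma beta_sym:
  assumes h: "h \<in> borel_measurable M"
  shows "(\<integral>\<^sup>+ z. ennreal (beta_k M psi k z) * h (T k z) \<partial>M) = (\<integral>\<^sup>+ z. ennreal (beta_k M psi k z) * h z \<partial>M)"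
proof -
  have hL[measurable]: "h \<in> borel_measurable L" using h unfolding borel_L_iff .
  let ?G = "\<lambda>z. fd 0 z * ennreal (beta_k M psi k z)"
  have G1: "AE z in L. ?G z = ennreal (Sf z)"
    using good_AE by eventually_elim (simp add: beta_good mult.commute)
  have S: "AE z in L. \<forall>i\<in>{..k}. fd i (T k z) = fd (k - i) z"
    by (rule AE_finite_allI) (auto intro: fd_sym)
  have G2: "AE z in L. good (T k z)"
    by (rule AE_inv[OF T_meas_L lam_inv good_AE])
  have G3: "AE z in L. ?G (T k z) = ?G z"
    using good_AE G2 S
  proof eventually_elim
    case (elim z)
    have "?G (T k z) = ennreal (Sf (T k z))" using beta_good[OF elim(2)] by (simp add: mult.commute)
    also have "\<dots> = ennreal (Sf z)" using Sf_sym[OF elim(3)] by simp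
    also have "\<dots> = ?G z" using beta_good[OF elim(1)] by (simp add: mult.commute)
    finally show ?case .
  qed
  have "(\<integral>\<^sup>+ z. ennreal (beta_k M psi k z) * h (T k z) \<partial>M) =
      (\<integral>\<^sup>+ z. ennreal (beta_k M psi k z) * h (T k z) \<partial>density L (fd 0))"
    using dens0 by simp
  also have "\<dots> = (\<integral>\<^sup>+ z. fd 0 z * (ennreal (beta_k M psi k z) * h (T k z)) \<partial>L)"
    by (rule nn_integral_density) measurable
  also have "\<dots> = (\<integral>\<^sup>+ z. ?G (T k z) * h (T k z) \<partial>L)"
  proof (rule nn_integral_cong_AE)
    show "AE z in L. fd 0 z * (ennreal (beta_k M psi k z) * h (T k z)) = ?G (T k z) * h (T k z)"
      using G3 by eventually_elim (simp add: mult.assoc[symmetric])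
  qed
  also have "\<dots> = (\<integral>\<^sup>+ w. ?G w * h w \<partial>distr L L (T k))"
    by (rule nn_integral_distr[symmetric]) measurable
  also have "\<dots> = (\<integral>\<^sup>+ w. fd 0 w * (ennreal (beta_k M psi k w) * h w) \<partial>L)"
    unfolding lam_inv by (simp add: mult.assoc)
  also have "\<dots> = (\<integral>\<^sup>+ z. ennreal (beta_k M psi k z) * h z \<partial>density L (fd 0))"
    by (rule nn_integral_density[symmetric]) measurable
  also have "\<dots> = (\<integral>\<^sup>+ z. ennreal (beta_k M psi k z) * h z \<partial>M)"
    using dens0 by simp
  finally show ?thesis .
qed

end

context mysetup begin

lemma beta_sym':
  assumes k: "1 \<le> k" and h: "h \<in> borel_measurable M"
  shows "(\<integral>\<^sup>+ z. ennreal (beta_k M psi k z) * h (T k z) \<partial>M) = (\<integral>\<^sup>+ z. ennreal (beta_k M psi k z) * h z \<partial>M)"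
proof -
  interpret fixk M psi k by unfold_locales (rule k)
  show ?thesis by (rule beta_sym[OF h])
qed

lemma Ik:
  assumes k: "1 \<le> k" and g[measurable]: "g \<in> borel_measurable M" and g2: "integrable M (\<lambda>z. (g z)\<^sup>2)"
  shows "integrable M (\<lambda>z. beta_k M psi k z * g z * (g z - g (T k z)))"
    and "0 \<le> (\<integral>z. beta_k M psi k z * g z * (g z - g (T k z)) \<partial>M)"
proof -
  let ?b = "beta_k M psi k"
  have b01: "\<And>z. 0 \<le> ?b z \<and> ?b z \<le> 1" using beta_bounds[OF k] by simp
  have i1: "integrable M (\<lambda>z. ?b z * (g z)\<^sup>2)"
  proof (rule Bochner_Integration.integrable_bound[OF g2])
    show "AE z in M. norm (?b z * (g z)\<^sup>2) \<le> norm ((g z)\<^sup>2)"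
      using b01 by (auto intro!: mult_left_le_one_le simp: abs_mult)
  qed measurable
  have "(\<integral>\<^sup>+ z. ennreal (?b z * (g (T k z))\<^sup>2) \<partial>M) = (\<integral>\<^sup>+ z. ennreal (?b z) * ennreal ((g (T k z))\<^sup>2) \<partial>M)"
    using b01 by (intro nn_integral_cong) (simp add: ennreal_mult)
  also have "\<dots> = (\<integral>\<^sup>+ z. ennreal (?b z) * ennreal ((g z)\<^sup>2) \<partial>M)"
    by (rule beta_sym'[OF k, of "\<lambda>z. ennreal ((g z)\<^sup>2)"]) measurable
  also have "\<dots> = (\<integral>\<^sup>+ z. ennreal (?b z * (g z)\<^sup>2) \<partial>M)"
    using b01 by (intro nn_integral_cong) (simp add: ennreal_mult)
  also have "\<dots> = ennreal (\<integral>z. ?b z * (g z)\<^sup>2 \<partial>M)"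
    using b01 by (intro nn_integral_eq_integral i1) auto
  finally have "(\<integral>\<^sup>+ z. ennreal (?b z * (g (T k z))\<^sup>2) \<partial>M) = ennreal (\<integral>z. ?b z * (g z)\<^sup>2 \<partial>M)" .
  moreover have "0 \<le> (\<integral>z. ?b z * (g z)\<^sup>2 \<partial>M)" using b01 by (intro integral_nonneg_AE) auto
  ultimately have i2: "integrable M (\<lambda>z. ?b z * (g (T k z))\<^sup>2)"
    and e2: "(\<integral>z. ?b z * (g (T k z))\<^sup>2 \<partial>M) = (\<integral>z. ?b z * (g z)\<^sup>2 \<partial>M)"
    using nn_integral_eq_integrable[where f="\<lambda>z. ?b z * (g (T k z))\<^sup>2" and M=M and x="\<integral>z. ?b z * (g z)\<^sup>2 \<partial>M"] b01
    by (auto simp: measurable_compose[OF T_meas g])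
  have ineq: "\<And>z. ?b z * g z * g (T k z) \<le> (?b z * (g z)\<^sup>2 + ?b z * (g (T k z))\<^sup>2) / 2"
  proof -
    fix z
    have "g z * g (T k z) \<le> ((g z)\<^sup>2 + (g (T k z))\<^sup>2) / 2"
      using sum_squares_bound[of "g z" "g (T k z)"] by (simp add: power2_eq_square algebra_simps)
    then have "?b z * (g z * g (T k z)) \<le> ?b z * (((g z)\<^sup>2 + (g (T k z))\<^sup>2) / 2)"
      using b01 by (intro mult_left_mono) auto
    then show "?b z * g z * g (T k z) \<le> (?b z * (g z)\<^sup>2 + ?b z * (g (T k z))\<^sup>2) / 2"
      by (simp add: algebra_simps)
  qed
  have i12: "integrable M (\<lambda>z. (?b z * (g z)\<^sup>2 + ?b z * (g (T k z))\<^sup>2) / 2)"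
    using i1 i2 by auto
  have i3: "integrable M (\<lambda>z. ?b z * g z * g (T k z))"
  proof (rule Bochner_Integration.integrable_bound[OF i12])
    show "AE z in M. norm (?b z * g z * g (T k z)) \<le> norm ((?b z * (g z)\<^sup>2 + ?b z * (g (T k z))\<^sup>2) / 2)"
    proof (intro AE_I2)
      fix z
      have "?b z * (- g z * g (T k z)) \<le> ?b z * (((g z)\<^sup>2 + (g (T k z))\<^sup>2) / 2)"
        using sum_squares_bound[of "- g z" "g (T k z)"] b01
        by (intro mult_left_mono) (auto simp: power2_eq_square algebra_simps)
      then have "- (?b z * g z * g (T k z)) \<le> (?b z * (g z)\<^sup>2 + ?b z * (g (T k z))\<^sup>2) / 2"
        by (simp add: algebra_simps)
      moreover have "0 \<le> (?b z * (g z)\<^sup>2 + ?b z * (g (T k z))\<^sup>2) / 2" using b01 by simp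
      ultimately show "norm (?b z * g z * g (T k z)) \<le> norm ((?b z * (g z)\<^sup>2 + ?b z * (g (T k z))\<^sup>2) / 2)"
        using ineq[of z] by simp
    qed
  qed (simp add: measurable_compose[OF T_meas g])
  have eq: "\<And>z. ?b z * g z * (g z - g (T k z)) = ?b z * (g z)\<^sup>2 - ?b z * g z * g (T k z)"
    by (simp add: power2_eq_square algebra_simps)
  show "integrable M (\<lambda>z. ?b z * g z * (g z - g (T k z)))"
    unfolding eq using i1 i3 by auto
  have "(\<integral>z. ?b z * g z * g (T k z) \<partial>M) \<le> (\<integral>z. (?b z * (g z)\<^sup>2 + ?b z * (g (T k z))\<^sup>2) / 2 \<partial>M)"
    by (rule integral_mono[OF i3 i12 ineq])
  also have "\<dots> = (\<integral>z. ?b z * (g z)\<^sup>2 \<partial>M)"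
    using i1 i2 e2 by simp
  finally show "0 \<le> (\<integral>z. ?b z * g z * (g z - g (T k z)) \<partial>M)"
    unfolding eq using i1 i3 by simp
qed

end

context mysetup begin

lemma dir_eq:
  assumes g[measurable]: "g \<in> borel_measurable M" and g2: "integrable M (\<lambda>z. (g z)\<^sup>2)"
  shows "dirichlet M g (\<lambda>f. P_K M psi K (Qop f)) =
    (\<Sum>k=1..K. \<integral>z. beta_k M psi k z * g z * (g z - g (T k z)) \<partial>M)"
proof -
  have pt: "g z * (g z - P_K M psi K (Qop g) z) = (\<Sum>k=1..K. beta_k M psi k z * g z * (g z - g (T k z)))" for z
  proof -
    let ?B = "\<Sum>k=1..K. beta_k M psi k z"
    let ?C = "\<Sum>k=1..K. beta_k M psi k z * g (T k z)"
    have P: "P_K M psi K (Qop g) z = ?C + (1 - ?B) * g z"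
      by (simp add: P_K_def rho_K_def Qop_def Tm_def)
    have "(\<Sum>k=1..K. beta_k M psi k z * g z * (g z - g (T k z))) =
        (\<Sum>k=1..K. beta_k M psi k z * (g z * g z) - g z * (beta_k M psi k z * g (T k z)))"
      by (intro sum.cong refl) (simp add: algebra_simps)
    also have "\<dots> = ?B * (g z * g z) - g z * ?C"
      by (simp add: sum_subtractf sum_distrib_left sum_distrib_right)
    also have "\<dots> = g z * (g z - P_K M psi K (Qop g) z)"
      unfolding P by (simp add: algebra_simps)
    finally show ?thesis by simp
  qed
  have "dirichlet M g (\<lambda>f. P_K M psi K (Qop f)) =
      (\<integral>z. (\<Sum>k=1..K. beta_k M psi k z * g z * (g z - g (T k z))) \<partial>M)"
    unfolding dirichlet_def pt ..
  also have "\<dots> = (\<Sum>k=1..K. \<integral>z. beta_k M psi k z * g z * (g z - g (T k z)) \<partial>M)"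
    by (rule Bochner_Integration.integral_sum) (use Ik(1)[OF _ g g2] in auto)
  finally show ?thesis .
qed

lemma dir_mono:
  assumes g[measurable]: "g \<in> borel_measurable M" and g2: "integrable M (\<lambda>z. (g z)\<^sup>2)"
    and KL: "K \<le> L'"
  shows "dirichlet M g (\<lambda>f. P_K M psi K (Qop f)) \<le> dirichlet M g (\<lambda>f. P_K M psi L' (Qop f))"
  unfolding dir_eq[OF g g2]
  by (rule sum_mono2) (use KL Ik(2)[OF _ g g2] in auto)

end

lemma normal_sym: "distr (density lborel (\<lambda>v. ennreal (normal_density 0 \<sigma> v))) borel uminus
    = density lborel (\<lambda>v. ennreal (normal_density 0 \<sigma> v))"
proof -
  have "distr (density lborel (\<lambda>v. ennreal (normal_density 0 \<sigma> v))) borel uminus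
      = distr (density (distr lborel borel uminus) (\<lambda>v. ennreal (normal_density 0 \<sigma> v))) lborel uminus"
    by (intro distr_cong) (simp_all add: lborel_distr_uminus)
  also have "\<dots> = density lborel ((\<lambda>v. ennreal (normal_density 0 \<sigma> v)) \<circ> uminus)"
    by (rule distr_density_distr) auto
  finally have e: "distr (density lborel (\<lambda>v. ennreal (normal_density 0 \<sigma> v))) borel uminus
      = density lborel ((\<lambda>v. ennreal (normal_density 0 \<sigma> v)) \<circ> uminus)" .
  moreover have "(\<lambda>v. ennreal (normal_density 0 \<sigma> v)) \<circ> uminus = (\<lambda>v. ennreal (normal_density 0 \<sigma> v))"
    by (simp add: fun_eq_iff normal_density_def)
  ultimately show ?thesis using e by simp
qed

theorem lemma3p12:
  fixes pi0 :: "real measure" and \<sigma> :: real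
    and psi :: "state \<Rightarrow> state" and g :: "state \<Rightarrow> real"
  assumes "prob_space pi0" and "sets pi0 = sets borel"
    and "\<sigma> > 0"
    and "psi \<in> borel_measurable borel"
    and "bij psi"
    and "inv psi = xi \<circ> psi \<circ> xi"
    and "g \<in> borel_measurable (pi0 \<Otimes>\<^sub>M density lborel (\<lambda>v. ennreal (normal_density 0 \<sigma> v)))"
    and "integrable (pi0 \<Otimes>\<^sub>M density lborel (\<lambda>v. ennreal (normal_density 0 \<sigma> v))) (\<lambda>z. (g z)\<^sup>2)"
  shows "\<forall>K L. 1 \<le> K \<longrightarrow> K \<le> L \<longrightarrow>
           dirichlet (pi0 \<Otimes>\<^sub>M density lborel (\<lambda>v. ennreal (normal_density 0 \<sigma> v))) g
             (\<lambda>f. P_K (pi0 \<Otimes>\<^sub>M density lborel (\<lambda>v. ennreal (normal_density 0 \<sigma> v))) psi K (Qop f))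
           \<le> dirichlet (pi0 \<Otimes>\<^sub>M density lborel (\<lambda>v. ennreal (normal_density 0 \<sigma> v))) g
             (\<lambda>f. P_K (pi0 \<Otimes>\<^sub>M density lborel (\<lambda>v. ennreal (normal_density 0 \<sigma> v))) psi L (Qop f))"
proof -
  note A = assms
  define N where "N = density lborel (\<lambda>v. ennreal (normal_density 0 \<sigma> v))"
  have pN: "prob_space N" unfolding N_def by (rule prob_space_normal_density) (use A(3) in simp)
  have sN: "sets N = sets borel" unfolding N_def by simp
  have pM: "prob_space (pi0 \<Otimes>\<^sub>M N)" by (rule prob_space_pair[OF A(1) pN])
  have sM2: "sets (pi0 \<Otimes>\<^sub>M N) = sets (borel \<Otimes>\<^sub>M borel)"
    using sets_pair_measure_cong[OF A(2) sN] .
  have sM: "sets (pi0 \<Otimes>\<^sub>M N) = sets borel"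
    by (simp only: sM2 borel_prod)
  have d1: "distr pi0 borel (\<lambda>x. x) = pi0" by (rule distr_id2) (simp add: A(2))
  have d2: "distr N borel uminus = N" unfolding N_def by (rule normal_sym)
  have sfN: "sigma_finite_measure (distr N borel uminus)"
    unfolding d2 using pN by (simp add: prob_space_imp_sigma_finite)
  have "distr pi0 borel (\<lambda>x. x) \<Otimes>\<^sub>M distr N borel uminus =
      distr (pi0 \<Otimes>\<^sub>M N) (borel \<Otimes>\<^sub>M borel) (\<lambda>(x, y). (x, - y))"
  proof (rule pair_measure_distr[OF _ _ sfN])
    show "(\<lambda>x. x) \<in> measurable pi0 borel" by (rule measurable_ident_sets[OF A(2)])
    have "(uminus :: real \<Rightarrow> real) \<in> borel_measurable borel"
      by (rule borel_measurable_continuous_onI) (rule continuous_on_minus[OF continuous_on_id])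
    then show "(uminus :: real \<Rightarrow> real) \<in> borel_measurable N"
      unfolding measurable_cong_sets[OF sN refl] .
  qed
  then have "distr (pi0 \<Otimes>\<^sub>M N) (borel \<Otimes>\<^sub>M borel) (\<lambda>(x, y). (x, - y)) = pi0 \<Otimes>\<^sub>M N"
    unfolding d1 d2 by simp
  moreover have "distr (pi0 \<Otimes>\<^sub>M N) (pi0 \<Otimes>\<^sub>M N) xi = distr (pi0 \<Otimes>\<^sub>M N) (borel \<Otimes>\<^sub>M borel) (\<lambda>(x, y). (x, - y))"
    by (rule distr_cong) (simp_all only: sM2 xi_def split_beta refl)
  ultimately have xinv: "distr (pi0 \<Otimes>\<^sub>M N) (pi0 \<Otimes>\<^sub>M N) xi = pi0 \<Otimes>\<^sub>M N" by simp
  have pxi: "psi (xi (psi z)) = xi z" for z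
  proof -
    have "inv psi (psi z) = z" using bij_is_inj[OF A(5)] by simp
    then have "xi (psi (xi (psi z))) = z" using A(6) by simp
    then have "xi (xi (psi (xi (psi z)))) = xi z" by simp
    then show ?thesis by simp
  qed
  interpret S: mysetup "pi0 \<Otimes>\<^sub>M N" psi
    by (rule mysetup.intro[OF pM mysetup_axioms.intro[OF sM xinv A(4) pxi]])
  have g7: "g \<in> borel_measurable (pi0 \<Otimes>\<^sub>M N)" using A(7) unfolding N_def .
  have g8: "integrable (pi0 \<Otimes>\<^sub>M N) (\<lambda>z. (g z)\<^sup>2)" using A(8) unfolding N_def .
  show ?thesis
  proof (intro allI impI)
    fix K L' :: nat assume KL: "1 \<le> K" "K \<le> L'"
    show "dirichlet (pi0 \<Otimes>\<^sub>M density lborel (\<lambda>v. ennreal (normal_density 0 \<sigma> v))) g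
             (\<lambda>f. P_K (pi0 \<Otimes>\<^sub>M density lborel (\<lambda>v. ennreal (normal_density 0 \<sigma> v))) psi K (Qop f))
           \<le> dirichlet (pi0 \<Otimes>\<^sub>M density lborel (\<lambda>v. ennreal (normal_density 0 \<sigma> v))) g
             (\<lambda>f. P_K (pi0 \<Otimes>\<^sub>M density lborel (\<lambda>v. ennreal (normal_density 0 \<sigma> v))) psi L' (Qop f))"
      using S.dir_mono[OF g7 g8 KL(2)] unfolding N_def .
  qed
qed

end
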